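(* Let $p\ge 2$, $w\ge 0$ and $z\in\mathbb{R}^{p-1}$. Let $|z_{(1)}|\ge |z_{(2)}|\ge\cdots$ denote the absolute values of the entries of $z$ sorted in decreasing order. Define \[ \tilde\lambda_1=\min\{\lambda\ge0:\|S(z,\lambda)\|_1+\lambda\le w\},\quad \tilde\lambda_2=\max\{\lambda\ge0:\|S(z,\lambda)\|_1+\lambda\le w\},\quad \tilde\lambda_3=\max\{\lambda\ge0:\|S(z,2\lambda)\|_1\ge w\}. \] Then: (1) $\|z\|_\infty\le w$ if and only if $\tilde\lambda_1,\tilde\lambda_2$ are finite, in which case $\tilde\lambda_1\le |z_{(2)}|$ and $\tilde\lambda_2=w$. (2) $\|z\|_1\ge w>0$ if and only if $\tilde\lambda_3$ is finite, in which case $\tilde\lambda_3\le (1-w/\|z\|_1)\,\|z\|_\infty/2$. (3) If $w>0$ and $\|z\|_\infty\le w\le \|z\|_1$, then $\tilde\lambda_3\le\tilde\lambda_1\le\tilde\lambda_2$.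
   Context: $S(x,t)=\mathrm{sign}(x)\cdot(|x|-t)_+$ is the soft-thresholding function, applied componentwise to vectors. Conventions: the minimum of an empty set is $+\infty$, the maximum of an empty set is $-\infty$, and the maximum of a set unbounded above is $+\infty$; "finite" means not $\pm\infty$. If $p-1=1$, set $|z_{(2)}|:=0$. *)

theory Defs
  imports Complex_Main "HOL-Library.Extended_Real"
begin

definition soft :: "real \<Rightarrow> real \<Rightarrow> real" where
  "soft x t = sgn x * max (\<bar>x\<bar> - t) 0"

text \<open>Vectors in R^(p-1) are lists of length p-1.\<close>
definition l1norm :: "real list \<Rightarrow> real" where
  "l1norm z = sum_list (map abs z)"

definition linfnorm :: "real list \<Rightarrow> real" where
  "linfnorm z = Max (set (map abs z))"

definition soft_l1 :: "real list \<Rightarrow> real \<Rightarrow> real" where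
  "soft_l1 z t = l1norm (map (\<lambda>x. soft x t) z)"

text \<open>|z_(2)|: second largest absolute value; 0 if z has only one entry.\<close>
definition second_abs :: "real list \<Rightarrow> real" where
  "second_abs z = (if length z = 1 then 0 else rev (sort (map abs z)) ! 1)"

text \<open>Extended min / max: min of empty set = +inf, max of empty set = -inf,
  max of a set unbounded above = +inf (infimum / supremum in ereal).\<close>
definition emin :: "real set \<Rightarrow> ereal" where
  "emin A = Inf (ereal ` A)"

definition emax :: "real set \<Rightarrow> ereal" where
  "emax A = Sup (ereal ` A)"

definition lam1 :: "real list \<Rightarrow> real \<Rightarrow> ereal" where
  "lam1 z w = emin {t. t \<ge> 0 \<and> soft_l1 z t + t \<le> w}"

definition lam2 :: "real list \<Rightarrow> real \<Rightarrow> ereal" where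
  "lam2 z w = emax {t. t \<ge> 0 \<and> soft_l1 z t + t \<le> w}"

definition lam3 :: "real list \<Rightarrow> real \<Rightarrow> ereal" where
  "lam3 z w = emax {t. t \<ge> 0 \<and> soft_l1 z (2 * t) \<ge> w}"

definition efinite :: "ereal \<Rightarrow> bool" where
  "efinite x \<longleftrightarrow> x \<noteq> \<infinity> \<and> x \<noteq> -\<infinity>"

end

theory Submission
  imports Defs "HOL-Library.Multiset"
begin

definition f :: "real list \<Rightarrow> real \<Rightarrow> real" where
  "f z t = sum_list (map (\<lambda>x. max (\<bar>x\<bar> - t) 0) z)"

lemma soft_abs: "t \<ge> 0 \<Longrightarrow> \<bar>soft x t\<bar> = max (\<bar>x\<bar> - t) 0"
  unfolding soft_def by (cases "x = 0") (auto simp: abs_mult sgn_if)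

lemma soft_l1_eq: "t \<ge> 0 \<Longrightarrow> soft_l1 z t = f z t"
  unfolding soft_l1_def l1norm_def f_def map_map o_def
  by (intro arg_cong[where f=sum_list] map_cong refl) (rule soft_abs)

lemma f_nonneg: "f z t \<ge> 0"
  unfolding f_def by (rule sum_list_nonneg) auto

lemma f_mono: "s \<le> t \<Longrightarrow> f z t \<le> f z s"
  unfolding f_def by (rule sum_list_mono) auto

lemma f_zero0: "f z 0 = l1norm z"
  unfolding f_def l1norm_def by (simp add: o_def)

lemma abs_le_linf: "x \<in> set z \<Longrightarrow> \<bar>x\<bar> \<le> linfnorm z"
  unfolding linfnorm_def by (rule Max_ge) auto

lemma linf_mem: "z \<noteq> [] \<Longrightarrow> \<exists>x\<in>set z. \<bar>x\<bar> = linfnorm z"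
proof -
  assume "z \<noteq> []"
  then have "linfnorm z \<in> set (map abs z)" unfolding linfnorm_def by (intro Max_in) auto
  then show ?thesis by auto
qed

lemma f_lower: "z \<noteq> [] \<Longrightarrow> f z t \<ge> linfnorm z - t"
proof -
  assume "z \<noteq> []"
  then obtain x where x: "x \<in> set z" "\<bar>x\<bar> = linfnorm z" using linf_mem by blast
  have "max (\<bar>x\<bar> - t) 0 \<le> f z t"
    unfolding f_def by (rule member_le_sum_list) (use x in \<open>auto intro: image_eqI[where x=x]\<close>)
  then show ?thesis using x by linarith
qed

lemma f_zero: "t \<ge> linfnorm z \<Longrightarrow> f z t = 0"
  unfolding f_def by (rule sum_list_nonneg_eq_0_iff[THEN iffD2]) (auto dest: abs_le_linf)

lemma elem_bound:
  fixes x s M :: real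
  assumes "0 \<le> s" "s \<le> M" "\<bar>x\<bar> \<le> M" "M > 0"
  shows "max (\<bar>x\<bar> - s) 0 \<le> (1 - s / M) * \<bar>x\<bar>"
proof (cases "\<bar>x\<bar> \<le> s")
  case True
  have "0 \<le> 1 - s / M" using assms by (simp add: field_simps)
  then show ?thesis using True by auto
next
  case False
  have "s * \<bar>x\<bar> \<le> s * M" using assms by (simp add: mult_left_mono)
  then have "s * \<bar>x\<bar> / M \<le> s" using assms by (simp add: field_simps)
  then show ?thesis using False by (simp add: algebra_simps)
qed

lemma f_upper:
  assumes "0 \<le> s" "s \<le> linfnorm z" "linfnorm z > 0"
  shows "f z s \<le> (1 - s / linfnorm z) * l1norm z"
proof -
  have "f z s \<le> sum_list (map (\<lambda>x. (1 - s / linfnorm z) * \<bar>x\<bar>) z)"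
    unfolding f_def
  proof (rule sum_list_mono)
    fix x assume "x \<in> set z"
    then have "\<bar>x\<bar> \<le> linfnorm z" by (rule abs_le_linf)
    then show "max (\<bar>x\<bar> - s) 0 \<le> (1 - s / linfnorm z) * \<bar>x\<bar>"
      using assms by (intro elem_bound) auto
  qed
  also have "\<dots> = (1 - s / linfnorm z) * l1norm z"
    unfolding l1norm_def by (simp add: sum_list_const_mult o_def)
  finally show ?thesis .
qed

lemma sum_list_strict:
  fixes g h :: "'a \<Rightarrow> real"
  shows "(\<forall>x\<in>set z. g x \<le> h x) \<Longrightarrow> (\<exists>x\<in>set z. g x < h x) \<Longrightarrow>
    sum_list (map g z) < sum_list (map h z)"
proof (induction z)
  case Nil then show ?case by simp
next
  case (Cons a z)
  have le: "sum_list (map g z) \<le> sum_list (map h z)"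
    using Cons.prems(1) by (intro sum_list_mono) auto
  show ?case
  proof (cases "g a < h a")
    case True then show ?thesis using le by simp
  next
    case False
    then have "\<exists>x\<in>set z. g x < h x" using Cons.prems by auto
    then have "sum_list (map g z) < sum_list (map h z)" using Cons by auto
    then show ?thesis using Cons.prems by simp
  qed
qed

lemma f_strict:
  assumes "l1norm z > 0" "t > 0"
  shows "f z t < l1norm z"
proof -
  have "\<exists>x\<in>set z. x \<noteq> 0"
  proof (rule ccontr)
    assume "\<not> ?thesis"
    then have "l1norm z = 0" unfolding l1norm_def
      by (intro sum_list_nonneg_eq_0_iff[THEN iffD2]) auto
    then show False using assms by simp
  qed
  then have "\<exists>x\<in>set z. max (\<bar>x\<bar> - t) 0 < \<bar>x\<bar>" using assms(2) by auto
  then have "f z t < sum_list (map abs z)"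
    unfolding f_def by (intro sum_list_strict) auto
  then show ?thesis unfolding l1norm_def by simp
qed

lemma sum_list_perm:
  "mset xs = mset ys \<Longrightarrow> sum_list (map g xs) = sum_list (map (g::'a\<Rightarrow>'b::comm_monoid_add) ys)"
proof -
  assume h: "mset xs = mset ys"
  have "sum_list (map g xs) = sum_mset (mset (map g xs))" by (simp only: sum_mset_sum_list)
  also have "\<dots> = sum_mset (mset (map g ys))" by (simp only: mset_map h)
  also have "\<dots> = sum_list (map g ys)" by (simp only: sum_mset_sum_list)
  finally show ?thesis .
qed

lemma second_abs_prop:
  assumes "z \<noteq> []"
  shows "second_abs z \<ge> 0 \<and> f z (second_abs z) + second_abs z = linfnorm z"
proof (cases "length z = 1")
  case True
  then obtain x where z: "z = [x]" by (cases z) auto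
  show ?thesis using z unfolding second_abs_def f_def linfnorm_def by simp
next
  case False
  define s where "s = rev (sort (map abs z))"
  have ms: "mset s = mset (map abs z)" unfolding s_def by simp
  have sets: "set s = set (map abs z)" by (metis ms set_mset_mset)
  have len: "length s \<ge> 2" using False assms unfolding s_def
    by (cases z) (auto simp: Suc_le_eq)
  then obtain a b r where s: "s = a # b # r"
  proof -
    have "\<exists>a b r. s = a # b # r" using len by (cases s; cases "tl s") auto
    then show ?thesis using that by blast
  qed
  have sw: "sorted_wrt (\<ge>) s" unfolding s_def sorted_wrt_rev
    using sorted_sort[of "map abs z"] by simp
  then have ab: "b \<le> a" "\<forall>c\<in>set r. c \<le> b" "\<forall>c\<in>set r. c \<le> a" using s by auto
  have sa: "second_abs z = b" unfolding second_abs_def using False s s_def by simp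
  have lin: "linfnorm z = a"
  proof -
    have "linfnorm z = Max (set s)" unfolding linfnorm_def sets ..
    also have "\<dots> = a" using ab s by (intro Max_eqI) auto
    finally show ?thesis .
  qed
  have b0: "b \<ge> 0"
  proof -
    have "b \<in> set (map abs z)" using sets s by auto
    then show ?thesis by auto
  qed
  have "f z b = sum_list (map (\<lambda>x. max (x - b) 0) (map abs z))"
    unfolding f_def by (simp add: o_def)
  also have "\<dots> = sum_list (map (\<lambda>x. max (x - b) 0) s)"
    by (rule sum_list_perm[OF ms[symmetric]])
  also have "\<dots> = (a - b) + sum_list (map (\<lambda>x. max (x - b) 0) r)"
    using s ab by simp
  also have "sum_list (map (\<lambda>x. max (x - b) 0) r) = 0"
    using ab by (intro sum_list_nonneg_eq_0_iff[THEN iffD2]) auto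
  finally show ?thesis using sa lin b0 by simp
qed



lemma emin_empty: "emin {} = \<infinity>" unfolding emin_def by (simp add: top_ereal_def)
lemma emax_empty: "emax {} = -\<infinity>" unfolding emax_def by (simp add: bot_ereal_def)
lemma emin_le: "a \<in> S \<Longrightarrow> emin S \<le> ereal a" unfolding emin_def by (rule Inf_lower) auto
lemma emax_ge: "a \<in> S \<Longrightarrow> ereal a \<le> emax S" unfolding emax_def by (rule Sup_upper) auto
lemma emin_ge: "(\<And>x. x \<in> S \<Longrightarrow> b \<le> x) \<Longrightarrow> ereal b \<le> emin S"
  unfolding emin_def by (rule Inf_greatest) auto
lemma emax_le: "(\<And>x. x \<in> S \<Longrightarrow> x \<le> b) \<Longrightarrow> emax S \<le> ereal b"
  unfolding emax_def by (rule Sup_least) auto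
lemma emin_fin: "a \<in> S \<Longrightarrow> (\<And>x. x \<in> S \<Longrightarrow> b \<le> x) \<Longrightarrow> efinite (emin S)"
  unfolding efinite_def using emin_le[of a S] emin_ge[of S b] by auto
lemma emax_fin: "a \<in> S \<Longrightarrow> (\<And>x. x \<in> S \<Longrightarrow> x \<le> b) \<Longrightarrow> efinite (emax S)"
  unfolding efinite_def using emax_ge[of a S] emax_le[of S b] by auto
lemma emax_unb: "emax {t::real. t \<ge> 0} = \<infinity>"
proof (rule ereal_top)
  fix B
  show "ereal B \<le> emax {t::real. t \<ge> 0}" using emax_ge[of "max B 0" "{t. t \<ge> 0}"]
    by (auto intro: order_trans)
qed

theorem lemma2:
  fixes p :: nat and w :: real and z :: "real list"
  assumes "p \<ge> 2" and "w \<ge> 0" and "length z = p - 1"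
  shows "(linfnorm z \<le> w \<longleftrightarrow> efinite (lam1 z w) \<and> efinite (lam2 z w))
       \<and> (linfnorm z \<le> w \<longrightarrow> lam1 z w \<le> ereal (second_abs z) \<and> lam2 z w = ereal w)
       \<and> (l1norm z \<ge> w \<and> w > 0 \<longleftrightarrow> efinite (lam3 z w))
       \<and> (l1norm z \<ge> w \<and> w > 0 \<longrightarrow>
            lam3 z w \<le> ereal ((1 - w / l1norm z) * linfnorm z / 2))
       \<and> (w > 0 \<and> linfnorm z \<le> w \<and> w \<le> l1norm z \<longrightarrow>
            lam3 z w \<le> lam1 z w \<and> lam1 z w \<le> lam2 z w)"
proof -
  have zne: "z \<noteq> []" using assms by auto
  define M where "M = linfnorm z"
  define L where "L = l1norm z"
  define A where "A = {t. t \<ge> 0 \<and> soft_l1 z t + t \<le> w}"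
  define B where "B = {t. t \<ge> 0 \<and> soft_l1 z (2 * t) \<ge> w}"
  have l1: "lam1 z w = emin A" and l2: "lam2 z w = emax A" and l3: "lam3 z w = emax B"
    unfolding lam1_def lam2_def lam3_def A_def B_def by auto
  have A_eq: "A = {t. t \<ge> 0 \<and> f z t + t \<le> w}" unfolding A_def using soft_l1_eq by auto
  have B_eq: "B = {t. t \<ge> 0 \<and> f z (2 * t) \<ge> w}" unfolding B_def using soft_l1_eq by auto
  have M0: "M \<ge> 0" using linf_mem[OF zne] M_def by auto
  have LM: "L \<ge> M" using f_lower[OF zne, of 0] f_zero0 M_def L_def by simp
  have A_ub: "\<And>t. t \<in> A \<Longrightarrow> t \<le> w" unfolding A_eq using f_nonneg by (smt (verit) mem_Collect_eq)
  have A_lb: "\<And>t. t \<in> A \<Longrightarrow> 0 \<le> t" unfolding A_eq by auto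
  have A_ne: "M \<le> w \<longleftrightarrow> A \<noteq> {}"
  proof
    assume "M \<le> w" then have "w \<in> A" unfolding A_eq using f_zero[of z w] M_def assms(2) by simp
    then show "A \<noteq> {}" by auto
  next
    assume "A \<noteq> {}" then obtain t where "t \<in> A" by auto
    then show "M \<le> w" unfolding A_eq using f_lower[OF zne, of t] M_def by auto
  qed
  have P1: "M \<le> w \<longleftrightarrow> efinite (lam1 z w) \<and> efinite (lam2 z w)"
  proof
    assume "M \<le> w"
    then obtain a where "a \<in> A" using A_ne by auto
    then show "efinite (lam1 z w) \<and> efinite (lam2 z w)" unfolding l1 l2
      using emin_fin[OF _ A_lb] emax_fin[OF _ A_ub] by blast
  next
    assume h: "efinite (lam1 z w) \<and> efinite (lam2 z w)"
    show "M \<le> w"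
    proof (rule ccontr)
      assume "\<not> M \<le> w"
      then have "A = {}" using A_ne by auto
      then show False using h unfolding l1 efinite_def by (simp add: emin_empty)
    qed
  qed
  have P2: "M \<le> w \<longrightarrow> lam1 z w \<le> ereal (second_abs z) \<and> lam2 z w = ereal w"
  proof
    assume Mw: "M \<le> w"
    have "second_abs z \<in> A" unfolding A_eq using second_abs_prop[OF zne] Mw M_def by simp
    moreover have "w \<in> A" unfolding A_eq using f_zero[of z w] M_def assms(2) Mw by simp
    ultimately show "lam1 z w \<le> ereal (second_abs z) \<and> lam2 z w = ereal w"
      unfolding l1 l2 using emin_le emax_ge emax_le[OF A_ub] by (metis antisym)
  qed
  have B_bound: "\<And>t. w > 0 \<Longrightarrow> L \<ge> w \<Longrightarrow> t \<in> B \<Longrightarrow> t \<le> (1 - w / L) * M / 2"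
  proof -
    fix t assume w0: "w > 0" and Lw: "L \<ge> w" and tB: "t \<in> B"
    have t0: "t \<ge> 0" and ft: "f z (2 * t) \<ge> w" using tB unfolding B_eq by auto
    have tM: "2 * t < M"
    proof (rule ccontr)
      assume "\<not> 2 * t < M"
      then have "f z (2 * t) = 0" using f_zero[of z "2*t"] M_def by simp
      then show False using ft w0 by simp
    qed
    have Mp: "M > 0" using tM t0 by simp
    have "w \<le> (1 - 2 * t / M) * L" using f_upper[of "2*t" z] t0 tM Mp ft M_def L_def by simp
    then have "w \<le> L - 2 * t * L / M" by (simp add: algebra_simps)
    then have "w * M \<le> L * M - 2 * t * L" using Mp by (simp add: field_simps)
    then have "2 * t * L \<le> (L - w) * M" by (simp add: algebra_simps)
    then have "2 * t \<le> (L - w) * M / L" using Lw w0 by (simp add: field_simps)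
    also have "(L - w) * M / L = (1 - w / L) * M" using Lw w0 by (simp add: field_simps)
    finally show "t \<le> (1 - w / L) * M / 2" by simp
  qed
  have P3: "L \<ge> w \<and> w > 0 \<longleftrightarrow> efinite (lam3 z w)"
  proof
    assume h: "L \<ge> w \<and> w > 0"
    have "0 \<in> B" unfolding B_eq using h f_zero0 L_def by simp
    then show "efinite (lam3 z w)" unfolding l3 using emax_fin B_bound h by blast
  next
    assume h: "efinite (lam3 z w)"
    show "L \<ge> w \<and> w > 0"
    proof (rule ccontr)
      assume "\<not> (L \<ge> w \<and> w > 0)"
      then consider "w = 0" | "L < w" using assms(2) by linarith
      then show False
      proof cases
        case 1
        then have "B = {t. t \<ge> 0}" unfolding B_eq using f_nonneg by auto
        then show False using h unfolding l3 efinite_def by (simp add: emax_unb)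
      next
        case 2
        have "B = {}" unfolding B_eq using f_mono[of 0 "2 * _" z] f_zero0 L_def 2
          by (auto, smt (verit) f_mono f_zero0)
        then show False using h unfolding l3 efinite_def by (simp add: emax_empty)
      qed
    qed
  qed
  have P4: "L \<ge> w \<and> w > 0 \<longrightarrow> lam3 z w \<le> ereal ((1 - w / L) * M / 2)"
    unfolding l3 using B_bound emax_le by blast
  have P5: "w > 0 \<and> M \<le> w \<and> w \<le> L \<longrightarrow> lam3 z w \<le> lam1 z w \<and> lam1 z w \<le> lam2 z w"
  proof
    assume h: "w > 0 \<and> M \<le> w \<and> w \<le> L"
    obtain a where aA: "a \<in> A" using h A_ne by auto
    have key: "\<And>t s. t \<in> B \<Longrightarrow> s \<in> A \<Longrightarrow> t \<le> s"
    proof (rule ccontr)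
      fix t s assume tB: "t \<in> B" and sA: "s \<in> A" and n: "\<not> t \<le> s"
      have s0: "s \<ge> 0" and fs: "f z s + s \<le> w" using sA unfolding A_eq by auto
      have t0: "t \<ge> 0" and ft: "f z (2*t) \<ge> w" using tB unfolding B_eq by auto
      have "f z (2*t) \<le> f z s" using f_mono[of s "2*t" z] n s0 by simp
      then have "s = 0" using fs ft s0 by simp
      then have "L \<le> w" using fs f_zero0 L_def by simp
      then have "L = w" using h by simp
      moreover have "f z (2*t) < L" using f_strict[of z "2*t"] h n s0 \<open>s = 0\<close> L_def by simp
      ultimately show False using ft by simp
    qed
    have "emax B \<le> emin A" unfolding emax_def emin_def
      by (rule Sup_least, rule Inf_greatest) (use key in auto)
    moreover have "emin A \<le> emax A" using emin_le[OF aA] emax_ge[OF aA] by (rule order_trans)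
    ultimately show "lam3 z w \<le> lam1 z w \<and> lam1 z w \<le> lam2 z w" unfolding l1 l2 l3 by simp
  qed
  show ?thesis using P1 P2 P3 P4 P5 unfolding M_def L_def by blast
qed

end
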